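(* The relation $\le$ on $\mathcal{F}_{\mathrm{ord}}(n)$ is a partial order, and its covering relation is exactly $\lessdot$ (that is, $F'$ is covered by $F$ if and only if $F'$ is obtained from $F$ by operating on one non-leaf vertex of $F$).
   Context: An ordered forest is a finite forest of rooted trees in which the children of each vertex are linearly ordered (left to right) and the trees are linearly ordered (left to right); $\mathcal{F}_{\mathrm{ord}}(n)$ is the set of ordered forests on $n$ vertices up to isomorphism preserving roots, edge orientations and all orderings. Vertices are labeled $1,\dots,n$ by (left-to-right) preorder traversal: trees are traversed left to right, and within a tree each vertex is labeled before its subtrees, which are traversed left to right. Operation on a vertex $v$ of $F$: if $v$ is a leaf, $F$ is unchanged; otherwise let $v'$ be the rightmost child of $v$; delete the edge $v\to v'$, and if $v$ has a parent $w$, attach $v'$ (with its subtree) as a child of $w$ placed immediately to the right of $v$, while if $v$ is a root, the subtree of $v'$ becomes a new tree placed immediately to the right of the tree containing $v$. Define $F'\lessdot F$ if $F'$ is obtained from $F$ by operating on one non-leaf vertex, and $F'\le F$ if there is a sequence $F'=F_1,\dots,F_k=F$ ($k\ge1$) in $\mathcal{F}_{\mathrm{ord}}(n)$ with $F_i\lessdot F_{i+1}$ for all $i$. *)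

theory Defs
  imports Main
begin

text \<open>Up to isomorphism preserving roots,
  edge orientations and all orderings, ordered forests correspond exactly to values of type
  otree list.\<close>
datatype otree = Node "otree list"

fun nverts_t :: "otree \<Rightarrow> nat" and nverts_f :: "otree list \<Rightarrow> nat" where
  "nverts_t (Node cs) = Suc (nverts_f cs)"
| "nverts_f [] = 0"
| "nverts_f (t # ts) = nverts_t t + nverts_f ts"

definition forests :: "nat \<Rightarrow> otree list set" where
  "forests n = {F. nverts_f F = n}"

text \<open>Vertices are indexed 0..n-1 in left-to-right preorder (index i is label i+1).
  children_at i F is the list of child subtrees of vertex i.\<close>
fun children_at :: "nat \<Rightarrow> otree list \<Rightarrow> otree list" where
  "children_at i [] = []"
| "children_at i (Node cs # ts) =
     (if i = 0 then cs
      else if i - 1 < nverts_f cs then children_at (i - 1) cs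
      else children_at (i - 1 - nverts_f cs) ts)"

text \<open>The operation on vertex i: detach the rightmost child and place it immediately to the
  right of the vertex among its siblings (or as a new tree right of the vertex's tree if the
  vertex is a root).\<close>
fun operate :: "nat \<Rightarrow> otree list \<Rightarrow> otree list" where
  "operate i [] = []"
| "operate i (Node cs # ts) =
     (if i = 0 then (if cs = [] then Node cs # ts else Node (butlast cs) # last cs # ts)
      else if i - 1 < nverts_f cs then Node (operate (i - 1) cs) # ts
      else Node cs # operate (i - 1 - nverts_f cs) ts)"

definition covers :: "nat \<Rightarrow> otree list \<Rightarrow> otree list \<Rightarrow> bool" where
  "covers n F' F \<longleftrightarrow> F \<in> forests n \<and> F' \<in> forests n \<and>
     (\<exists>i < n. children_at i F \<noteq> [] \<and> F' = operate i F)"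

definition fle :: "nat \<Rightarrow> otree list \<Rightarrow> otree list \<Rightarrow> bool" where
  "fle n F' F \<longleftrightarrow> F' \<in> forests n \<and> F \<in> forests n \<and> (covers n)\<^sup>*\<^sup>* F' F"

definition fle_rel :: "nat \<Rightarrow> (otree list \<times> otree list) set" where
  "fle_rel n = {(F', F). fle n F' F}"


end

theory Submission
  imports Defs
begin

lemma nverts_app: "nverts_f (xs @ ys) = nverts_f xs + nverts_f ys"
  by (induction xs) auto

lemma nverts_t_pos: "nverts_t t > 0"
  by (cases t) auto

lemma children_app:
  "children_at k (xs @ ys) = (if k < nverts_f xs then children_at k xs else children_at (k - nverts_f xs) ys)"
proof (induction xs arbitrary: k)
  case Nil then show ?case by simp
next
  case (Cons t xs)
  obtain cs where t: "t = Node cs" by (cases t)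
  show ?case using Cons by (auto simp: t nverts_app)
qed

lemma nverts_butlast: "xs \<noteq> [] \<Longrightarrow> nverts_f xs = nverts_f (butlast xs) + nverts_t (last xs)"
  by (metis append_butlast_last_id nverts_app nverts_f.simps add_0_right)

lemma nverts_operate: "nverts_f (operate i F) = nverts_f F"
  by (induction i F rule: operate.induct) (auto simp: nverts_butlast)

lemma children_operate_same: "children_at i (operate i F) = butlast (children_at i F)"
  by (induction i F rule: operate.induct) (auto simp: nverts_operate nverts_butlast)

lemma children_operate_other:
  "j \<noteq> i \<Longrightarrow> nverts_f (children_at j (operate i F)) = nverts_f (children_at j F)"
proof (induction i F arbitrary: j rule: operate.induct)
  case (1 i)
  then show ?case by simp
next
  case (2 i cs ts)
  show ?case
  proof (cases "i = 0")
    case True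
    show ?thesis
    proof (cases "cs = []")
      case True with \<open>i = 0\<close> show ?thesis by simp
    next
      case False
      have cs: "cs = butlast cs @ [last cs]" using False by simp
      have nb: "nverts_f cs = nverts_f (butlast cs) + nverts_t (last cs)"
        using False nverts_butlast by blast
      have "children_at (j - 1) cs = children_at (j - 1) (butlast cs @ [last cs])"
        using cs by simp
      then show ?thesis using \<open>i = 0\<close> False 2(3) nb nverts_t_pos[of "last cs"]
        apply (cases "last cs")
        apply (simp add: children_app split: if_splits)
        apply (auto simp: children_app)
        done
    qed
  next
    case False
    then show ?thesis using 2 by (auto simp: nverts_operate)
  qed
qed


abbreviation cc :: "nat \<Rightarrow> otree list \<Rightarrow> nat" where
  "cc j F \<equiv> nverts_f (children_at j F)"

lemma covers_cc:
  assumes "covers n F' F"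
  shows "(\<forall>j. cc j F' \<le> cc j F) \<and> (\<exists>j. cc j F' < cc j F)"
proof -
  obtain i where i: "children_at i F \<noteq> []" "F' = operate i F"
    using assms unfolding covers_def by blast
  have lt: "cc i F' < cc i F"
    using i nverts_butlast[OF i(1)] nverts_t_pos[of "last (children_at i F)"]
    by (simp add: children_operate_same)
  have "cc j F' \<le> cc j F" for j
    using lt i(2) children_operate_other[of j i F] by (cases "j = i") auto
  with lt show ?thesis by blast
qed

lemma covers_cc_other:
  assumes "covers n F' F" "cc j F' < cc j F"
  shows "F' = operate j F"
proof -
  obtain i where i: "children_at i F \<noteq> []" "F' = operate i F"
    using assms unfolding covers_def by blast
  have "i = j" using children_operate_other[of j i F] i(2) assms(2) by fastforce
  with i show ?thesis by simp
qed

lemma rtr_cc: "(covers n)\<^sup>*\<^sup>* F' F \<Longrightarrow> cc j F' \<le> cc j F"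
proof (induction rule: rtranclp_induct)
  case base then show ?case by simp
next
  case (step y z) then show ?case using covers_cc[OF step(2)] by (meson le_trans)
qed

lemma tr_cc: "(covers n)\<^sup>+\<^sup>+ F' F \<Longrightarrow> \<exists>j. cc j F' < cc j F"
proof (induction rule: tranclp_induct)
  case (base y) then show ?case using covers_cc by blast
next
  case (step y z) then show ?case using covers_cc[OF step(2)] by (meson order.strict_trans2)
qed

lemma tr_irrefl: "\<not> (covers n)\<^sup>+\<^sup>+ F F"
  using tr_cc by blast

lemma rtr_neq: "(covers n)\<^sup>*\<^sup>* F' F \<Longrightarrow> F' \<noteq> F \<Longrightarrow> (covers n)\<^sup>+\<^sup>+ F' F"
  using rtranclpD by metis

theorem theorem4p6:
  fixes n :: nat
  shows "partial_order_on (forests n) (fle_rel n) \<and>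
    (\<forall>F' \<in> forests n. \<forall>F \<in> forests n.
       ((fle n F' F \<and> F' \<noteq> F \<and>
         \<not> (\<exists>G. fle n F' G \<and> F' \<noteq> G \<and> fle n G F \<and> G \<noteq> F))
        \<longleftrightarrow> covers n F' F))"
proof (intro conjI ballI)
  show "partial_order_on (forests n) (fle_rel n)"
    unfolding partial_order_on_def preorder_on_def
  proof (intro conjI)
    show "fle_rel n \<subseteq> forests n \<times> forests n" by (auto simp: fle_rel_def fle_def)
    show "refl_on (forests n) (fle_rel n)" by (auto simp: refl_on_def fle_rel_def fle_def)
    show "trans (fle_rel n)" unfolding trans_def fle_rel_def fle_def by auto
    show "antisym (fle_rel n)" unfolding antisym_def fle_rel_def fle_def
    proof (clarsimp)
      fix x y assume a: "(covers n)\<^sup>*\<^sup>* x y" "(covers n)\<^sup>*\<^sup>* y x"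
      show "x = y"
      proof (rule ccontr)
        assume "x \<noteq> y"
        then have "(covers n)\<^sup>+\<^sup>+ x y" using a rtr_neq by blast
        then have "(covers n)\<^sup>+\<^sup>+ x x" using a(2) by auto
        then show False using tr_irrefl by blast
      qed
    qed
  qed
next
  fix F' F assume F': "F' \<in> forests n" and F: "F \<in> forests n"
  show "(fle n F' F \<and> F' \<noteq> F \<and>
         \<not> (\<exists>G. fle n F' G \<and> F' \<noteq> G \<and> fle n G F \<and> G \<noteq> F))
        \<longleftrightarrow> covers n F' F"
  proof
    assume a: "fle n F' F \<and> F' \<noteq> F \<and>
         \<not> (\<exists>G. fle n F' G \<and> F' \<noteq> G \<and> fle n G F \<and> G \<noteq> F)"
    then have "(covers n)\<^sup>*\<^sup>* F' F" by (simp add: fle_def)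
    then obtain G where G: "covers n F' G" "(covers n)\<^sup>*\<^sup>* G F"
      using a by (metis converse_rtranclpE)
    show "covers n F' F"
    proof (cases "G = F")
      case True then show ?thesis using G by simp
    next
      case False
      have "G \<in> forests n" using G(1) by (simp add: covers_def)
      moreover have "F' \<noteq> G" using G(1) tr_irrefl by fastforce
      ultimately show ?thesis using a G False F F' by (auto simp: fle_def)
    qed
  next
    assume c: "covers n F' F"
    obtain v where v: "children_at v F \<noteq> []" "F' = operate v F"
      using c unfolding covers_def by blast
    have lt: "cc v F' < cc v F"
      using v nverts_butlast[OF v(1)] nverts_t_pos[of "last (children_at v F)"]
      by (simp add: children_operate_same)
    have "fle n F' F" using c F F' by (auto simp: fle_def)
    moreover have "F' \<noteq> F" using c tr_irrefl by fastforce
    moreover have "\<not> (fle n F' G \<and> F' \<noteq> G \<and> fle n G F \<and> G \<noteq> F)" for G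
    proof
      assume g: "fle n F' G \<and> F' \<noteq> G \<and> fle n G F \<and> G \<noteq> F"
      then have "(covers n)\<^sup>+\<^sup>+ G F" using rtr_neq by (auto simp: fle_def)
      then obtain X where X: "(covers n)\<^sup>*\<^sup>* G X" "covers n X F"
        by (metis tranclp.cases tranclp_into_rtranclp rtranclp.rtrancl_refl)
      have FG: "(covers n)\<^sup>+\<^sup>+ F' G" using g rtr_neq by (auto simp: fle_def)
      have "(covers n)\<^sup>*\<^sup>* F' X" using FG X(1) by auto
      obtain j where j: "cc j X < cc j F" using covers_cc[OF X(2)] by blast
      have "cc j F' \<le> cc j X" using \<open>(covers n)\<^sup>*\<^sup>* F' X\<close> by (rule rtr_cc)
      with j have "cc j F' < cc j F" by simp
      then have "X = F'" using covers_cc_other[OF X(2) j] covers_cc_other[OF c] by simp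
      then have "(covers n)\<^sup>+\<^sup>+ F' F'" using FG X(1) by auto
      then show False using tr_irrefl by blast
    qed
    ultimately show "fle n F' F \<and> F' \<noteq> F \<and>
         \<not> (\<exists>G. fle n F' G \<and> F' \<noteq> G \<and> fle n G F \<and> G \<noteq> F)" by blast
  qed
qed

end
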